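(* For every $\kappa_G$-NMPG there exist a family of local potential functions $\{\hat\Phi_i\}_{i\in\mathcal N}$ (i.e. satisfying the NMPG identity) and constants $\Phi_{\min},\Phi_{\max}>0$ with $0\le\Phi_{\max}-\Phi_{\min}\le\frac{2n(\kappa_G)}{1-\gamma}$ such that $\Phi_{\min}\le\hat\Phi_i(\xi)\le\Phi_{\max}$ for all $i\in\mathcal N$ and all $\xi\in\Xi$.
   Context: Networked Markov game. There are $n$ agents $\mathcal N=\{1,\dots,n\}$ placed at the nodes of an undirected graph $\mathcal G=(\mathcal N,\mathcal E)$ with graph distance $\mathrm{dist}$. For an integer $\kappa\ge0$, $N_i^\kappa=\{j\in\mathcal N:\mathrm{dist}(i,j)\le\kappa\}$ (so $i\in N_i^\kappa$), $\mathcal N_i=N_i^1$, $-N_i^\kappa=\mathcal N\setminus N_i^\kappa$, and $n(\kappa)=\max_i|N_i^\kappa|$. Agent $i$ has a finite local state space $\mathcal S_i$ and a finite local action space $\mathcal A_i$; $\mathcal S=\prod_i\mathcal S_i$, $\mathcal A=\prod_i\mathcal A_i$, and for $I\subseteq\mathcal N$ we write $s_I,a_I,\mathcal S_I,\mathcal A_I$ for the joint states/actions/spaces of the agents in $I$ (the subscript $-i$ means $\mathcal N\setminus\{i\}$). The dynamics are $\mathcal P(s'\mid s,a)=\prod_i\mathcal P_i(s_i'\mid s_{\mathcal N_i},a_i)$, the initial distribution is $\mu\in\Delta(\mathcal S)$, and $\gamma\in(0,1)$ is a discount factor. Each agent has a reward $r_i:\mathcal S\times\mathcal A\to[0,1]$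 depending only on $(s_{N_i^{\kappa_r}},a_{N_i^{\kappa_r}})$ for a fixed integer $\kappa_r\ge0$. A local policy of agent $i$ is a map $\xi_i:\mathcal S_i\to\Delta(\mathcal A_i)$; $\Xi_i$ is the set of them, $\Xi_I=\prod_{i\in I}\Xi_i$, $\Xi=\Xi_{\mathcal N}$, and a joint policy $\xi=(\xi_1,\dots,\xi_n)$ acts by $\xi(a\mid s)=\prod_i\xi_i(a_i\mid s_i)$. $J_i(\xi)=\sum_{t\ge0}\gamma^t\mathbb E_\xi[r_i(s(t),a(t))]$ with $s(0)\sim\mu$. NMPG: for an integer $\kappa_G\ge0$, the game is a $\kappa_G$-networked Markov potential game ($\kappa_G$-NMPG) if there are functions $\Phi_i:\Xi\to\mathbb R$, $i\in\mathcal N$ (local potentials), such that for every $i\in\mathcal N$, $j\in N_i^{\kappa_G}$, $\xi_j,\xi_j'\in\Xi_j$, $\xi_{-j}\in\Xi_{-j}$: $J_j(\xi_j',\xi_{-j})-J_j(\xi_j,\xi_{-j})=\Phi_i(\xi_j',\xi_{-j})-\Phi_i(\xi_j,\xi_{-j})$. *)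

theory Defs
  imports Complex_Main "HOL-Library.FuncSet"
begin

(* All local states live in a common
   type 's with carriers S i; all local actions in 'a with carriers A i. *)

fun nbhd :: "('i \<Rightarrow> 'i \<Rightarrow> bool) \<Rightarrow> 'i \<Rightarrow> nat \<Rightarrow> 'i set" where
  "nbhd E i 0 = {i}"
| "nbhd E i (Suc k) = nbhd E i k \<union> {j. \<exists>l\<in>nbhd E i k. E l j}"

definition nmax :: "('i::finite \<Rightarrow> 'i \<Rightarrow> bool) \<Rightarrow> nat \<Rightarrow> nat" where
  "nmax E k = Max ((\<lambda>i. card (nbhd E i k)) ` UNIV)"

definition jstates :: "('i \<Rightarrow> 's set) \<Rightarrow> ('i \<Rightarrow> 's) set" where
  "jstates S = Pi\<^sub>E UNIV S"

definition jactions :: "('i \<Rightarrow> 'a set) \<Rightarrow> ('i \<Rightarrow> 'a) set" where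
  "jactions A = Pi\<^sub>E UNIV A"

text \<open>A local policy xi_i : S_i -> Delta(A_i), represented as xi s a = xi_i(a|s),
  zero outside the carriers.\<close>
definition local_policy :: "'s set \<Rightarrow> 'a set \<Rightarrow> ('s \<Rightarrow> 'a \<Rightarrow> real) \<Rightarrow> bool" where
  "local_policy Si Ai xi \<longleftrightarrow>
     (\<forall>s\<in>Si. (\<forall>a. 0 \<le> xi s a) \<and> sum (xi s) Ai = 1) \<and>
     (\<forall>s a. (s \<notin> Si \<or> a \<notin> Ai) \<longrightarrow> xi s a = 0)"

definition policies :: "('i \<Rightarrow> 's set) \<Rightarrow> ('i \<Rightarrow> 'a set) \<Rightarrow> ('i \<Rightarrow> 's \<Rightarrow> 'a \<Rightarrow> real) set" where
  "policies S A = {xi. \<forall>i. local_policy (S i) (A i) (xi i)}"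

definition joint_prob :: "('i::finite \<Rightarrow> 's \<Rightarrow> 'a \<Rightarrow> real) \<Rightarrow> ('i \<Rightarrow> 's) \<Rightarrow> ('i \<Rightarrow> 'a) \<Rightarrow> real" where
  "joint_prob xi s a = (\<Prod>i\<in>UNIV. xi i (s i) (a i))"

text \<open>P(s'|s,a) = prod_i P_i(s'_i | s_{N_i}, a_i); here P i s ai si' = P_i(si'|s,ai).\<close>
definition trans_prob :: "('i::finite \<Rightarrow> ('i \<Rightarrow> 's) \<Rightarrow> 'a \<Rightarrow> 's \<Rightarrow> real) \<Rightarrow> ('i \<Rightarrow> 's) \<Rightarrow> ('i \<Rightarrow> 'a) \<Rightarrow> ('i \<Rightarrow> 's) \<Rightarrow> real" where
  "trans_prob P s a s' = (\<Prod>i\<in>UNIV. P i s (a i) (s' i))"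

fun state_dist :: "('i::finite \<Rightarrow> 's set) \<Rightarrow> ('i \<Rightarrow> 'a set) \<Rightarrow> ('i \<Rightarrow> ('i \<Rightarrow> 's) \<Rightarrow> 'a \<Rightarrow> 's \<Rightarrow> real)
   \<Rightarrow> (('i \<Rightarrow> 's) \<Rightarrow> real) \<Rightarrow> ('i \<Rightarrow> 's \<Rightarrow> 'a \<Rightarrow> real) \<Rightarrow> nat \<Rightarrow> ('i \<Rightarrow> 's) \<Rightarrow> real" where
  "state_dist S A P mu xi 0 = mu"
| "state_dist S A P mu xi (Suc t) = (\<lambda>s'. \<Sum>s\<in>jstates S. state_dist S A P mu xi t s *
       (\<Sum>a\<in>jactions A. joint_prob xi s a * trans_prob P s a s'))"

definition value_fn :: "('i::finite \<Rightarrow> 's set) \<Rightarrow> ('i \<Rightarrow> 'a set) \<Rightarrow> ('i \<Rightarrow> ('i \<Rightarrow> 's) \<Rightarrow> 'a \<Rightarrow> 's \<Rightarrow> real)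
   \<Rightarrow> (('i \<Rightarrow> 's) \<Rightarrow> real) \<Rightarrow> real \<Rightarrow> (('i \<Rightarrow> 's) \<Rightarrow> ('i \<Rightarrow> 'a) \<Rightarrow> real)
   \<Rightarrow> ('i \<Rightarrow> 's \<Rightarrow> 'a \<Rightarrow> real) \<Rightarrow> real" where
  "value_fn S A P mu \<gamma> r xi =
     (\<Sum>t. \<gamma> ^ t * (\<Sum>s\<in>jstates S. state_dist S A P mu xi t s *
           (\<Sum>a\<in>jactions A. joint_prob xi s a * r s a)))"

definition networked_game ::
  "('i::finite \<Rightarrow> 's set) \<Rightarrow> ('i \<Rightarrow> 'a set) \<Rightarrow> ('i \<Rightarrow> 'i \<Rightarrow> bool)
   \<Rightarrow> ('i \<Rightarrow> ('i \<Rightarrow> 's) \<Rightarrow> 'a \<Rightarrow> 's \<Rightarrow> real) \<Rightarrow> (('i \<Rightarrow> 's) \<Rightarrow> real) \<Rightarrow> real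
   \<Rightarrow> ('i \<Rightarrow> ('i \<Rightarrow> 's) \<Rightarrow> ('i \<Rightarrow> 'a) \<Rightarrow> real) \<Rightarrow> nat \<Rightarrow> bool" where
  "networked_game S A E P mu \<gamma> r \<kappa>r \<longleftrightarrow>
     (\<forall>i. finite (S i) \<and> S i \<noteq> {} \<and> finite (A i) \<and> A i \<noteq> {}) \<and>
     (\<forall>i j. E i j \<longleftrightarrow> E j i) \<and>
     (\<forall>i. \<forall>s\<in>jstates S. \<forall>ai\<in>A i. (\<forall>si'. 0 \<le> P i s ai si') \<and> sum (P i s ai) (S i) = 1) \<and>
     (\<forall>i. \<forall>s\<in>jstates S. \<forall>t\<in>jstates S. (\<forall>j\<in>nbhd E i 1. s j = t j) \<longrightarrow> P i s = P i t) \<and>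
     (\<forall>s\<in>jstates S. 0 \<le> mu s) \<and> sum mu (jstates S) = 1 \<and>
     0 < \<gamma> \<and> \<gamma> < 1 \<and>
     (\<forall>i. \<forall>s\<in>jstates S. \<forall>a\<in>jactions A. 0 \<le> r i s a \<and> r i s a \<le> 1) \<and>
     (\<forall>i. \<forall>s\<in>jstates S. \<forall>a\<in>jactions A. \<forall>t\<in>jstates S. \<forall>b\<in>jactions A.
        (\<forall>j\<in>nbhd E i \<kappa>r. s j = t j \<and> a j = b j) \<longrightarrow> r i s a = r i t b)"

definition local_potentials ::
  "('i::finite \<Rightarrow> 's set) \<Rightarrow> ('i \<Rightarrow> 'a set) \<Rightarrow> ('i \<Rightarrow> 'i \<Rightarrow> bool)
   \<Rightarrow> ('i \<Rightarrow> ('i \<Rightarrow> 's) \<Rightarrow> 'a \<Rightarrow> 's \<Rightarrow> real) \<Rightarrow> (('i \<Rightarrow> 's) \<Rightarrow> real) \<Rightarrow> real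
   \<Rightarrow> ('i \<Rightarrow> ('i \<Rightarrow> 's) \<Rightarrow> ('i \<Rightarrow> 'a) \<Rightarrow> real) \<Rightarrow> nat
   \<Rightarrow> ('i \<Rightarrow> ('i \<Rightarrow> 's \<Rightarrow> 'a \<Rightarrow> real) \<Rightarrow> real) \<Rightarrow> bool" where
  "local_potentials S A E P mu \<gamma> r \<kappa>G \<Phi> \<longleftrightarrow>
     (\<forall>i. \<forall>j\<in>nbhd E i \<kappa>G. \<forall>xi\<in>policies S A. \<forall>xj'. local_policy (S j) (A j) xj' \<longrightarrow>
        value_fn S A P mu \<gamma> (r j) (xi(j := xj')) - value_fn S A P mu \<gamma> (r j) xi
        = \<Phi> i (xi(j := xj')) - \<Phi> i xi)"

definition is_NMPG where
  "is_NMPG S A E P mu \<gamma> r \<kappa>G \<longleftrightarrow> (\<exists>\<Phi>. local_potentials S A E P mu \<gamma> r \<kappa>G \<Phi>)"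

end

theory Submission
  imports Defs
begin

lemma sum_PiE_prod_one:
  fixes f :: "'i::finite \<Rightarrow> 'x \<Rightarrow> real"
  assumes "\<And>i. finite (B i)" "\<And>i. sum (f i) (B i) = 1"
  shows "(\<Sum>g\<in>Pi\<^sub>E UNIV B. \<Prod>i\<in>UNIV. f i (g i)) = 1"
proof -
  have "(\<Prod>i\<in>UNIV. \<Sum>y\<in>B i. f i y) = (\<Sum>g\<in>Pi\<^sub>E UNIV B. \<Prod>i\<in>UNIV. f i (g i))"
    by (rule prod_sum_PiE) (auto simp: assms)
  then show ?thesis using assms(2) by simp
qed

lemma lp_nonneg:
  assumes "local_policy Si Ai xi" shows "0 \<le> xi s a"
proof (cases "s \<in> Si")
  case True then show ?thesis using assms unfolding local_policy_def by blast
next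
  case False then show ?thesis using assms unfolding local_policy_def by simp
qed

lemma jp_nonneg:
  assumes "xi \<in> policies S A"
  shows "0 \<le> joint_prob xi s a"
  unfolding joint_prob_def
  using assms unfolding policies_def
  by (intro prod_nonneg) (blast intro: lp_nonneg)

lemma jp_sum:
  assumes "xi \<in> policies S A" "s \<in> jstates S" "\<And>i. finite (A i)"
  shows "(\<Sum>a\<in>jactions A. joint_prob xi s a) = 1"
  unfolding joint_prob_def jactions_def
  apply (rule sum_PiE_prod_one)
  using assms unfolding policies_def local_policy_def jstates_def by (auto simp: PiE_iff)

context
  fixes S A E P mu \<gamma> r \<kappa>r
  assumes ng: "networked_game S A E P mu \<gamma> r \<kappa>r"
begin

lemma ngS: "finite (S i)" "S i \<noteq> {}" "finite (A i)" "A i \<noteq> {}"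
  using ng unfolding networked_game_def by blast+

lemma ngP: "s \<in> jstates S \<Longrightarrow> ai \<in> A i \<Longrightarrow> 0 \<le> P i s ai x"
  "s \<in> jstates S \<Longrightarrow> ai \<in> A i \<Longrightarrow> sum (P i s ai) (S i) = 1"
  using ng unfolding networked_game_def by blast+

lemma ngmu: "s \<in> jstates S \<Longrightarrow> 0 \<le> mu s" "sum mu (jstates S) = 1"
  using ng unfolding networked_game_def by blast+

lemma ngg: "0 < \<gamma>" "\<gamma> < 1"
  using ng unfolding networked_game_def by blast+

lemma ngr: "s \<in> jstates S \<Longrightarrow> a \<in> jactions A \<Longrightarrow> 0 \<le> r i s a"
  "s \<in> jstates S \<Longrightarrow> a \<in> jactions A \<Longrightarrow> r i s a \<le> 1"
  using ng unfolding networked_game_def by blast+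

lemma tp_nonneg:
  assumes "s \<in> jstates S" "a \<in> jactions A"
  shows "0 \<le> trans_prob P s a s'"
  unfolding trans_prob_def
proof (intro prod_nonneg)
  fix i show "0 \<le> P i s (a i) (s' i)"
    using assms(2) by (intro ngP(1)[OF assms(1)]) (auto simp: jactions_def)
qed

lemma tp_sum:
  assumes "s \<in> jstates S" "a \<in> jactions A"
  shows "(\<Sum>s'\<in>jstates S. trans_prob P s a s') = 1"
  unfolding trans_prob_def jstates_def
proof (rule sum_PiE_prod_one)
  fix i show "finite (S i)" by (rule ngS)
  show "sum (P i s (a i)) (S i) = 1"
    using assms(2) by (intro ngP(2)[OF assms(1)]) (auto simp: jactions_def)
qed

lemma sd_prob:
  assumes "xi \<in> policies S A"
  shows "(\<forall>s\<in>jstates S. 0 \<le> state_dist S A P mu xi t s) \<and> sum (state_dist S A P mu xi t) (jstates S) = 1"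
proof (induction t)
  case 0
  then show ?case using ngmu by simp
next
  case (Suc t)
  let ?d = "state_dist S A P mu xi t"
  have fA: "finite (jactions A)" "finite (jstates S)"
    unfolding jactions_def jstates_def
    by (auto intro!: finite_PiE ngS)
  have nn: "0 \<le> state_dist S A P mu xi (Suc t) s'" for s'
    using Suc jp_nonneg[OF assms] tp_nonneg
    by (auto intro!: sum_nonneg mult_nonneg_nonneg)
  have "sum (state_dist S A P mu xi (Suc t)) (jstates S)
     = (\<Sum>s\<in>jstates S. \<Sum>a\<in>jactions A. \<Sum>s'\<in>jstates S. ?d s * (joint_prob xi s a * trans_prob P s a s'))"
  proof -
    have "sum (state_dist S A P mu xi (Suc t)) (jstates S)
       = (\<Sum>s'\<in>jstates S. \<Sum>s\<in>jstates S. \<Sum>a\<in>jactions A. ?d s * (joint_prob xi s a * trans_prob P s a s'))"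
      by (simp only: state_dist.simps sum_distrib_left)
    also have "\<dots> = (\<Sum>s\<in>jstates S. \<Sum>s'\<in>jstates S. \<Sum>a\<in>jactions A. ?d s * (joint_prob xi s a * trans_prob P s a s'))"
      by (rule sum.swap)
    also have "\<dots> = (\<Sum>s\<in>jstates S. \<Sum>a\<in>jactions A. \<Sum>s'\<in>jstates S. ?d s * (joint_prob xi s a * trans_prob P s a s'))"
      by (intro sum.cong refl sum.swap)
    finally show ?thesis .
  qed
  also have "\<dots> = (\<Sum>s\<in>jstates S. \<Sum>a\<in>jactions A. ?d s * joint_prob xi s a)"
    by (intro sum.cong refl) (simp add: sum_distrib_left[symmetric] tp_sum)
  also have "\<dots> = (\<Sum>s\<in>jstates S. ?d s)"
    apply (intro sum.cong refl)
    using jp_sum[OF assms _ ngS(3)]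
    by (simp add: sum_distrib_left[symmetric])
  finally show ?case using nn Suc by simp
qed

lemma val_bounds:
  assumes xi: "xi \<in> policies S A"
    and rho: "\<forall>s\<in>jstates S. \<forall>a\<in>jactions A. 0 \<le> \<rho> s a \<and> \<rho> s a \<le> 1"
  shows "0 \<le> value_fn S A P mu \<gamma> \<rho> xi \<and> value_fn S A P mu \<gamma> \<rho> xi \<le> 1 / (1 - \<gamma>)"
proof -
  define x where "x t = (\<Sum>s\<in>jstates S. state_dist S A P mu xi t s *
           (\<Sum>a\<in>jactions A. joint_prob xi s a * \<rho> s a))" for t
  have g: "0 < \<gamma>" "\<gamma> < 1" by (rule ngg)+
  have fA: "\<And>i. finite (A i)" by (rule ngS)
  have inner: "0 \<le> (\<Sum>a\<in>jactions A. joint_prob xi s a * \<rho> s a) \<and> (\<Sum>a\<in>jactions A. joint_prob xi s a * \<rho> s a) \<le> 1"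
    if s: "s \<in> jstates S" for s
  proof
    show "0 \<le> (\<Sum>a\<in>jactions A. joint_prob xi s a * \<rho> s a)"
      using rho s jp_nonneg[OF xi] by (auto intro!: sum_nonneg)
    have "(\<Sum>a\<in>jactions A. joint_prob xi s a * \<rho> s a) \<le> (\<Sum>a\<in>jactions A. joint_prob xi s a)"
      using rho s jp_nonneg[OF xi] by (intro sum_mono) (simp add: mult_left_le)
    then show "(\<Sum>a\<in>jactions A. joint_prob xi s a * \<rho> s a) \<le> 1"
      using jp_sum[OF xi s fA] by simp
  qed
  have x: "0 \<le> x t \<and> x t \<le> 1" for t
  proof
    show "0 \<le> x t" unfolding x_def
    proof (rule sum_nonneg)
      fix s assume s: "s \<in> jstates S"
      show "0 \<le> state_dist S A P mu xi t s * (\<Sum>a\<in>jactions A. joint_prob xi s a * \<rho> s a)"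
        using sd_prob[OF xi, of t] inner[OF s] s by simp
    qed
    have "x t \<le> (\<Sum>s\<in>jstates S. state_dist S A P mu xi t s)"
      unfolding x_def using sd_prob[OF xi] inner by (intro sum_mono) (simp add: mult_left_le)
    then show "x t \<le> 1" using sd_prob[OF xi] by simp
  qed
  have sg: "summable (\<lambda>t. \<gamma> ^ t)" using g by (simp add: summable_geometric)
  have le: "norm (\<gamma> ^ t * x t) \<le> \<gamma> ^ t" for t
    using x[of t] g by (simp add: abs_mult mult_left_le)
  have sx: "summable (\<lambda>t. \<gamma> ^ t * x t)"
    by (rule summable_comparison_test[OF _ sg]) (use le in auto)
  have "value_fn S A P mu \<gamma> \<rho> xi = (\<Sum>t. \<gamma> ^ t * x t)"
    unfolding value_fn_def x_def by simp
  moreover have "0 \<le> (\<Sum>t. \<gamma> ^ t * x t)"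
    using sx x g by (intro suminf_nonneg) auto
  moreover have "(\<Sum>t. \<gamma> ^ t * x t) \<le> (\<Sum>t. \<gamma> ^ t)"
    using sx sg le by (intro suminf_le) (auto dest: abs_le_D1)
  moreover have "(\<Sum>t. \<gamma> ^ t) = 1 / (1 - \<gamma>)" using g by (simp add: suminf_geometric)
  ultimately show ?thesis by simp
qed

end

lemma lpD:
  assumes "local_potentials S A E P mu \<gamma> r \<kappa>G \<Phi>" "j \<in> nbhd E i \<kappa>G" "xi \<in> policies S A"
    "local_policy (S j) (A j) xj'"
  shows "value_fn S A P mu \<gamma> (r j) (xi(j := xj')) - value_fn S A P mu \<gamma> (r j) xi
        = \<Phi> i (xi(j := xj')) - \<Phi> i xi"
  using assms unfolding local_potentials_def by blast

lemma local_pot_bound: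
  assumes ng: "networked_game S A E P mu \<gamma> r \<kappa>r"
    and lp: "local_potentials S A E P mu \<gamma> r \<kappa>G \<Phi>"
    and x0: "\<forall>j. local_policy (S j) (A j) (\<xi>0 j)"
    and xi: "xi \<in> policies S A"
  shows "finite B \<Longrightarrow> B \<subseteq> nbhd E i \<kappa>G \<Longrightarrow>
    \<bar>\<Phi> i xi - \<Phi> i (\<lambda>j. if j \<in> B then \<xi>0 j else xi j)\<bar> \<le> real (card B) / (1 - \<gamma>)"
proof (induction B rule: finite_induct)
  case empty
  then show ?case by simp
next
  case (insert b B)
  define \<eta> where "\<eta> = (\<lambda>j. if j \<in> B then \<xi>0 j else xi j)"
  have eta: "\<eta> \<in> policies S A" using xi x0 unfolding \<eta>_def policies_def by auto
  have eq: "\<eta>(b := \<xi>0 b) = (\<lambda>j. if j \<in> insert b B then \<xi>0 j else xi j)"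
    unfolding \<eta>_def by auto
  have d: "\<Phi> i (\<eta>(b := \<xi>0 b)) - \<Phi> i \<eta> =
     value_fn S A P mu \<gamma> (r b) (\<eta>(b := \<xi>0 b)) - value_fn S A P mu \<gamma> (r b) \<eta>"
    using lpD[OF lp _ eta, of b i "\<xi>0 b"] insert.prems x0 by simp
  have rb: "\<forall>s\<in>jstates S. \<forall>a\<in>jactions A. 0 \<le> r b s a \<and> r b s a \<le> 1"
    using ngr[OF ng] by blast
  have eta2: "\<eta>(b := \<xi>0 b) \<in> policies S A" using eta x0 unfolding policies_def by auto
  have v1: "0 \<le> value_fn S A P mu \<gamma> (r b) \<eta> \<and> value_fn S A P mu \<gamma> (r b) \<eta> \<le> 1 / (1 - \<gamma>)"
    using val_bounds[OF ng eta rb] .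
  have v2: "0 \<le> value_fn S A P mu \<gamma> (r b) (\<eta>(b := \<xi>0 b)) \<and> value_fn S A P mu \<gamma> (r b) (\<eta>(b := \<xi>0 b)) \<le> 1 / (1 - \<gamma>)"
    using val_bounds[OF ng eta2 rb] .
  have step: "\<bar>\<Phi> i (\<eta>(b := \<xi>0 b)) - \<Phi> i \<eta>\<bar> \<le> 1 / (1 - \<gamma>)"
    using d v1 v2 by linarith
  have IH: "\<bar>\<Phi> i xi - \<Phi> i \<eta>\<bar> \<le> real (card B) / (1 - \<gamma>)"
    using insert unfolding \<eta>_def by auto
  have "real (card (insert b B)) / (1 - \<gamma>) = real (card B) / (1 - \<gamma>) + 1 / (1 - \<gamma>)"
    using insert by (simp add: add_divide_distrib)
  then show ?case using IH step eq abs_triangle_ineq[of "\<Phi> i xi - \<Phi> i \<eta>" "\<Phi> i \<eta> - \<Phi> i (\<eta>(b := \<xi>0 b))"] by (simp add: abs_minus_commute)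
qed

theorem mainTheorem8:
  fixes S :: "'i::finite \<Rightarrow> 's set" and A :: "'i \<Rightarrow> 'a set"
    and E :: "'i \<Rightarrow> 'i \<Rightarrow> bool"
    and P :: "'i \<Rightarrow> ('i \<Rightarrow> 's) \<Rightarrow> 'a \<Rightarrow> 's \<Rightarrow> real"
    and mu :: "('i \<Rightarrow> 's) \<Rightarrow> real" and \<gamma> :: real
    and r :: "'i \<Rightarrow> ('i \<Rightarrow> 's) \<Rightarrow> ('i \<Rightarrow> 'a) \<Rightarrow> real"
    and \<kappa>r \<kappa>G :: nat
  assumes "networked_game S A E P mu \<gamma> r \<kappa>r"
    and "is_NMPG S A E P mu \<gamma> r \<kappa>G"
  shows "\<exists>\<Phi> \<Phi>min \<Phi>max. local_potentials S A E P mu \<gamma> r \<kappa>G \<Phi> \<and>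
           0 < \<Phi>min \<and> 0 < \<Phi>max \<and> 0 \<le> \<Phi>max - \<Phi>min \<and>
           \<Phi>max - \<Phi>min \<le> 2 * real (nmax E \<kappa>G) / (1 - \<gamma>) \<and>
           (\<forall>i. \<forall>xi\<in>policies S A. \<Phi>min \<le> \<Phi> i xi \<and> \<Phi> i xi \<le> \<Phi>max)"
proof -
  note ng = assms(1)
  obtain \<Phi> where lp: "local_potentials S A E P mu \<gamma> r \<kappa>G \<Phi>"
    using assms(2) unfolding is_NMPG_def by blast
  have g: "0 < \<gamma>" "\<gamma> < 1" using ngg[OF ng] by auto
  define \<xi>0 where "\<xi>0 j = (\<lambda>s a. if s \<in> S j \<and> a \<in> A j then 1 / real (card (A j)) else 0)" for j
  have x0: "\<forall>j. local_policy (S j) (A j) (\<xi>0 j)"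
  proof
    fix j
    have "finite (A j)" "A j \<noteq> {}" using ngS[OF ng] by auto
    then have "card (A j) > 0" by (simp add: card_gt_0_iff)
    then show "local_policy (S j) (A j) (\<xi>0 j)"
      unfolding local_policy_def \<xi>0_def by auto
  qed
  define M where "M = real (nmax E \<kappa>G) / (1 - \<gamma>)"
  have M0: "0 \<le> M" unfolding M_def using g by simp
  define \<Psi> where "\<Psi> i xi = \<Phi> i xi - \<Phi> i (\<lambda>j. if j \<in> nbhd E i \<kappa>G then \<xi>0 j else xi j) + (M + 1)"
    for i xi
  have lp2: "local_potentials S A E P mu \<gamma> r \<kappa>G \<Psi>"
    unfolding local_potentials_def
  proof (intro allI ballI impI)
    fix i j xi xj'
    assume j: "j \<in> nbhd E i \<kappa>G" and xi: "xi \<in> policies S A" and xj: "local_policy (S j) (A j) xj'"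
    have same: "(\<lambda>k. if k \<in> nbhd E i \<kappa>G then \<xi>0 k else (xi(j := xj')) k)
        = (\<lambda>k. if k \<in> nbhd E i \<kappa>G then \<xi>0 k else xi k)" using j by auto
    show "value_fn S A P mu \<gamma> (r j) (xi(j := xj')) - value_fn S A P mu \<gamma> (r j) xi
        = \<Psi> i (xi(j := xj')) - \<Psi> i xi"
      using lpD[OF lp j xi xj] unfolding \<Psi>_def same by simp
  qed
  have bnd: "\<bar>\<Psi> i xi - (M + 1)\<bar> \<le> M" if xi: "xi \<in> policies S A" for i xi
  proof -
    have "\<bar>\<Phi> i xi - \<Phi> i (\<lambda>j. if j \<in> nbhd E i \<kappa>G then \<xi>0 j else xi j)\<bar>
        \<le> real (card (nbhd E i \<kappa>G)) / (1 - \<gamma>)"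
      by (rule local_pot_bound[OF ng lp x0 xi]) auto
    also have "\<dots> \<le> M"
    proof -
      have "card (nbhd E i \<kappa>G) \<le> nmax E \<kappa>G"
        unfolding nmax_def by (rule Max_ge) auto
      then show ?thesis unfolding M_def using g by (simp add: divide_right_mono)
    qed
    finally show ?thesis unfolding \<Psi>_def by simp
  qed
  show ?thesis
  proof (intro exI conjI)
    show "local_potentials S A E P mu \<gamma> r \<kappa>G \<Psi>" by (rule lp2)
    show "0 < (1::real)" by simp
    show "0 < 2 * M + 1" using M0 by simp
    show "0 \<le> 2 * M + 1 - 1" using M0 by simp
    show "2 * M + 1 - 1 \<le> 2 * real (nmax E \<kappa>G) / (1 - \<gamma>)" unfolding M_def by simp
    show "\<forall>i. \<forall>xi\<in>policies S A. 1 \<le> \<Psi> i xi \<and> \<Psi> i xi \<le> 2 * M + 1"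
    proof (intro allI ballI)
      fix i xi assume "xi \<in> policies S A"
      from bnd[OF this, of i] show "1 \<le> \<Psi> i xi \<and> \<Psi> i xi \<le> 2 * M + 1" by linarith
    qed
  qed
qed

end
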